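(* If a spherical curve $P$ has an incoherent bigon, then $r(P)\le 1$.
   Context: A spherical curve is a smooth immersion $P:S^1\to S^2$ whose self-intersections are finitely many transverse double points, called crossings. It is oriented and has at least one crossing. Regions are the components of $S^2\setminus P(S^1)$, and edges are the arcs of the curve between consecutive crossings. An $n$-gon is a region bounded by $n$ edges; a bigon is a $2$-gon. A region is coherent if its boundary edges, with the orientations induced from $P$, all run in the same rotational direction around the region; otherwise it is incoherent. In Gauss-word terms, a bigon with crossings $y,z$ is coherent iff the word has the form $y z\,W_1\,z y\,W_2$, and incoherent iff it has the form $y z\,W_1\,y z\,W_2$. The Gauss word is the cyclic word of crossings met in one traversal of the curve; each crossing appears twice. Crossings $a,b$ are interlaced if their occurrences alternate $a\dots b\dots a\dots b$. A crossing is reducible if no crossing is interlaced with it; equivalently, only three distinct regions meet at it. $P$ is reducible if it has a reducible crossing, and reduced otherwise. The inverse-half-twisted splice $I$ at a crossing $p$ takes the curve with cyclic Gauss word $p\,A\,p\,B$ to the curve with Gauss word $\overline{A}\,B$, where $\overline{A}$ is $A$ reversed. Geometrically, $p$ is smoothed in the unique way giving a single closed curve, and the result is re-oriented. The reductivity $r(P)$ is the minimal number of successive applications of $I$ needed to reach a reducible spherical curve; $r(P)=0$ if $P$ is reducible. *)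

theory Defs
  imports Main
begin

text \<open>A spherical curve is represented combinatorially by its Gauss word w (a nonempty
list of crossing labels, each occurring exactly twice) together with, for every crossing c,
a bit eps c recording on which side the second passage through c crosses the first one.
From this data the regions (faces) are computed by face tracing; the curve is spherical
(genus 0) iff the number of faces is (number of crossings) + 2 (Euler).\<close>

definition gauss_word :: "'a list \<Rightarrow> bool" where
  "gauss_word w \<longleftrightarrow> w \<noteq> [] \<and> (\<forall>x\<in>set w. count_list w x = 2)"

text \<open>Edge i runs from position i to position (i+1) mod length w.\<close>

definition other_occ :: "'a list \<Rightarrow> nat \<Rightarrow> nat" where
  "other_occ w p = (THE q. q < length w \<and> q \<noteq> p \<and> w ! q = w ! p)"

text \<open>delta w eps p: at position p, the other strand crosses the strand through p
from its right side to its left side.\<close>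
definition delta :: "'a list \<Rightarrow> ('a \<Rightarrow> bool) \<Rightarrow> nat \<Rightarrow> bool" where
  "delta w eps p = (if (\<forall>q<p. w ! q \<noteq> w ! p) then eps (w ! p) else \<not> eps (w ! p))"

text \<open>A state (i, True) means: edge i traversed in its own direction with the
region on the left; (i, False): edge i traversed against its direction with the region on
the left (i.e. the region lies on the right of edge i). Regions are traced keeping them on
the left, turning left at every crossing.\<close>
definition next_state :: "'a list \<Rightarrow> ('a \<Rightarrow> bool) \<Rightarrow> nat \<times> bool \<Rightarrow> nat \<times> bool" where
  "next_state w eps st = (let L = length w; i = fst st in
     if snd st then
       (let p = Suc i mod L; q = other_occ w p in
          if delta w eps p then (q, True) else ((q + L - 1) mod L, False))
     else
       (let q = other_occ w i in
          if delta w eps i then ((q + L - 1) mod L, False) else (q, True)))"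

definition states :: "'a list \<Rightarrow> (nat \<times> bool) set" where
  "states w = {0..<length w} \<times> UNIV"

definition region_of :: "'a list \<Rightarrow> ('a \<Rightarrow> bool) \<Rightarrow> nat \<times> bool \<Rightarrow> (nat \<times> bool) set" where
  "region_of w eps x = {(next_state w eps ^^ k) x | k. True}"

definition regions :: "'a list \<Rightarrow> ('a \<Rightarrow> bool) \<Rightarrow> (nat \<times> bool) set set" where
  "regions w eps = region_of w eps ` states w"

definition spherical_curve :: "'a list \<Rightarrow> ('a \<Rightarrow> bool) \<Rightarrow> bool" where
  "spherical_curve w eps \<longleftrightarrow> gauss_word w \<and> card (regions w eps) = card (set w) + 2"

definition bigon :: "(nat \<times> bool) set \<Rightarrow> bool" where
  "bigon R \<longleftrightarrow> card R = 2 \<and> card (fst ` R) = 2"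

text \<open>Coherent: all boundary edges run in the same rotational direction around the region.\<close>
definition coherent :: "(nat \<times> bool) set \<Rightarrow> bool" where
  "coherent R \<longleftrightarrow> (\<forall>x\<in>R. snd x) \<or> (\<forall>x\<in>R. \<not> snd x)"

definition interlaced :: "'a list \<Rightarrow> 'a \<Rightarrow> 'a \<Rightarrow> bool" where
  "interlaced w a b \<longleftrightarrow> a \<noteq> b \<and> (\<exists>i j k l. i < j \<and> j < k \<and> k < l \<and> l < length w \<and>
     ((w!i = a \<and> w!j = b \<and> w!k = a \<and> w!l = b) \<or> (w!i = b \<and> w!j = a \<and> w!k = b \<and> w!l = a)))"

definition reducible_crossing :: "'a list \<Rightarrow> 'a \<Rightarrow> bool" where
  "reducible_crossing w c \<longleftrightarrow> c \<in> set w \<and> \<not> (\<exists>b. interlaced w c b)"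

definition reducible :: "'a list \<Rightarrow> bool" where
  "reducible w \<longleftrightarrow> (\<exists>c\<in>set w. reducible_crossing w c)"

text \<open>Inverse-half-twisted splice: cyclic word p A p B becomes rev A @ B
(here B = Y @ X when the linear word is X @ p # A @ p # Y).\<close>
definition splice_step :: "'a list \<Rightarrow> 'a list \<Rightarrow> bool" where
  "splice_step w w' \<longleftrightarrow> (\<exists>p X A Y. w = X @ p # A @ p # Y \<and> p \<notin> set X \<and> p \<notin> set A
     \<and> p \<notin> set Y \<and> w' = rev A @ Y @ X)"

definition reductivity :: "'a list \<Rightarrow> nat" where
  "reductivity w = (LEAST k. \<exists>w'. (splice_step ^^ k) w w' \<and> reducible w')"

end

theory Submission imports Defs begin

lemma count_card: "count_list xs c = card {k. k < length xs \<and> xs!k = c}"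
  by (simp add: count_list_eq_length_filter length_filter_conv_card eq_commute)

lemma pos2:
  assumes "count_list w c = 2" "i < length w" "j < length w" "i \<noteq> j"
    "w!i = c" "w!j = c" "m < length w" "w!m = c"
  shows "m = i \<or> m = j"
proof (rule ccontr)
  assume "\<not> ?thesis"
  hence "{i,j,m} \<subseteq> {k. k < length w \<and> w!k = c}" "card {i,j,m} = 3" using assms by auto
  hence "3 \<le> card {k. k < length w \<and> w!k = c}" by (metis card_mono finite_Collect_conjI finite_Collect_less_nat)
  thus False using assms(1) count_card[of w c] by simp
qed

lemma other_occ:
  assumes "gauss_word w" "p < length w"
  shows "other_occ w p < length w \<and> other_occ w p \<noteq> p \<and> w ! other_occ w p = w ! p"
proof -
  let ?S = "{k. k < length w \<and> w!k = w!p}"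
  have c: "card ?S = 2" using assms count_card[of w "w!p"] unfolding gauss_word_def
    by (metis nth_mem)
  have "p \<in> ?S" using assms by simp
  hence "card (?S - {p}) = 1" using c by simp
  then obtain q where q: "?S - {p} = {q}" using card_1_singletonE by blast
  have ex: "q < length w \<and> q \<noteq> p \<and> w ! q = w ! p" using q by blast
  have "other_occ w p = q" unfolding other_occ_def
  proof (rule the_equality)
    show "q < length w \<and> q \<noteq> p \<and> w ! q = w ! p" by (rule ex)
    fix r assume "r < length w \<and> r \<noteq> p \<and> w ! r = w ! p"
    hence "r \<in> ?S - {p}" by simp
    thus "r = q" using q by simp
  qed
  thus ?thesis using ex by simp
qed

lemma smod: "i < (n::nat) \<Longrightarrow> Suc i mod n < n"
proof -
  assume "i < n" hence "0 < n" by simp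
  thus ?thesis by (rule mod_less_divisor)
qed

lemma adj_red:
  assumes "count_list w c = 2" "i < length w" "w!i = c" "j = Suc i mod length w" "w!j = c" "i \<noteq> j"
  shows "reducible w"
proof -
  have jl: "j < length w" unfolding assms(4) by (rule smod[OF assms(2)])
  have pos: "\<And>m. m < length w \<Longrightarrow> w!m = c \<Longrightarrow> m = i \<or> m = j"
    using pos2[OF assms(1,2) jl assms(6,3,5)] by blast
  have cases: "j = Suc i \<or> (Suc i = length w \<and> j = 0)" using assms(2,4)
    by (metis Suc_lessI mod_less mod_self)
  have "\<not> interlaced w c b" for b
  proof
    assume "interlaced w c b"
    then obtain i1 j1 k1 l1 where o: "i1 < j1" "j1 < k1" "k1 < l1" "l1 < length w"
      "(w!i1 = c \<and> w!j1 = b \<and> w!k1 = c \<and> w!l1 = b) \<or> (w!i1 = b \<and> w!j1 = c \<and> w!k1 = b \<and> w!l1 = c)"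
      and cb: "c \<noteq> b" unfolding interlaced_def by blast
    from o(5) show False
    proof
      assume h: "w!i1 = c \<and> w!j1 = b \<and> w!k1 = c \<and> w!l1 = b"
      have "i1 = i \<or> i1 = j" "k1 = i \<or> k1 = j" using pos h o by auto
      moreover have "j1 \<noteq> i" "j1 \<noteq> j" using h cb assms by auto
      ultimately show False using cases o by auto
    next
      assume h: "w!i1 = b \<and> w!j1 = c \<and> w!k1 = b \<and> w!l1 = c"
      have "j1 = i \<or> j1 = j" "l1 = i \<or> l1 = j" using pos h o by auto
      moreover have "k1 \<noteq> i" "k1 \<noteq> j" using h cb assms by auto
      ultimately show False using cases o by auto
    qed
  qed
  moreover have "c \<in> set w" using assms nth_mem by blast
  ultimately show ?thesis unfolding reducible_def reducible_crossing_def by blast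
qed


lemma red0: "reducible w \<Longrightarrow> reductivity w \<le> 1"
proof -
  assume "reducible w"
  hence "\<exists>w'. (splice_step ^^ 0) w w' \<and> reducible w'" by auto
  hence "reductivity w \<le> 0" unfolding reductivity_def by (rule Least_le)
  thus ?thesis by simp
qed

lemma red1: "splice_step w w' \<Longrightarrow> reducible w' \<Longrightarrow> reductivity w \<le> 1"
proof -
  assume "splice_step w w'" "reducible w'"
  hence "\<exists>w'. (splice_step ^^ 1) w w' \<and> reducible w'" by auto
  thus ?thesis unfolding reductivity_def by (rule Least_le)
qed

lemma red_adj2:
  assumes "count_list w' c = 2" "w' = U @ c # c # V"
  shows "reducible w'"
proof (rule adj_red[OF assms(1), of "length U" "Suc (length U)"])
  show "length U < length w'" "w' ! length U = c" "Suc (length U) = Suc (length U) mod length w'"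
    "w' ! Suc (length U) = c" "length U \<noteq> Suc (length U)"
    using assms(2) by (auto simp: nth_append)
qed

lemma splice_red:
  assumes gw: "gauss_word w" and ab: "a < b" "b < length w" and ya: "w!a = y" and yb: "w!b = y"
    and za: "w!(Suc a mod length w) = z" and zb: "w!(Suc b mod length w) = z" and yz: "y \<noteq> z"
  shows "reductivity w \<le> 1"
proof -
  define L where "L = length w"
  define X where "X = take a w"
  define A where "A = take (b - Suc a) (drop (Suc a) w)"
  define Y where "Y = drop (Suc b) w"
  have dec: "w = X @ y # A @ y # Y"
  proof -
    have "w = take a w @ drop a w" by simp
    also have "drop a w = w!a # drop (Suc a) w" using ab by (simp add: Cons_nth_drop_Suc)
    also have "drop (Suc a) w = A @ drop (b - Suc a) (drop (Suc a) w)" unfolding A_def by (simp only: append_take_drop_id)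
    also have "drop (b - Suc a) (drop (Suc a) w) = drop b w" using ab by simp
    also have "drop b w = w!b # Y" using ab unfolding Y_def by (simp add: Cons_nth_drop_Suc)
    finally show ?thesis using ya yb X_def by simp
  qed
  have cy: "count_list w y = 2" using gw ya ab unfolding gauss_word_def by (metis nth_mem order.strict_trans)
  have cz: "count_list w z = 2" using gw za ab unfolding gauss_word_def
    by (metis nth_mem mod_less_divisor order.strict_trans zero_less_iff_neq_zero less_nat_zero_code)
  have nX: "y \<notin> set X" and nA: "y \<notin> set A" and nY: "y \<notin> set Y"
    using cy dec by (auto simp: count_list_0_iff[symmetric])
  define w' where "w' = rev A @ Y @ X"
  have ss: "splice_step w w'" unfolding splice_step_def w'_def using dec nX nA nY by blast
  have cz': "count_list w' z = 2" using cz yz unfolding w'_def by (subst (asm) dec) auto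
  have sa: "Suc a < length w" using ab by simp
  hence za': "w ! Suc a = z" using za by simp
  have "Suc a \<noteq> b" using za' yb yz by auto
  hence "A \<noteq> []" "A ! 0 = z" unfolding A_def using ab za' by auto
  then obtain A' where A': "A = z # A'" by (cases A) auto
  show ?thesis
  proof (cases "Suc b < length w")
    case True
    hence "Y \<noteq> []" "Y ! 0 = z" unfolding Y_def using zb by auto
    then obtain Y' where "Y = z # Y'" by (cases Y) auto
    hence "w' = rev A' @ z # z # (Y' @ X)" unfolding w'_def using A' by simp
    thus ?thesis using red1[OF ss] red_adj2[OF cz'] by blast
  next
    case False
    hence "Suc b = length w" using ab by simp
    hence w0: "w ! 0 = z" using zb by simp
    have "a \<noteq> 0"
    proof
      assume "a = 0" thus False using ya yz w0 by simp
    qed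
    hence "X \<noteq> []" "X ! 0 = z" unfolding X_def using ab w0 by auto
    then obtain X' where "X = z # X'" by (cases X) auto
    moreover have "Y = []" unfolding Y_def using \<open>Suc b = length w\<close> by simp
    ultimately have "w' = rev A' @ z # z # X'" unfolding w'_def using A' by simp
    thus ?thesis using red1[OF ss] red_adj2[OF cz'] by blast
  qed
qed

lemma modlem: "q < L \<Longrightarrow> (q + L - 1) mod L = b \<Longrightarrow> q = Suc b mod L"
  by (cases q) auto

lemma fixT:
  assumes gw: "gauss_word w" and a: "a < length w" and e: "next_state w eps (a, True) = (a, True)"
  shows "reducible w"
proof -
  define p where "p = Suc a mod length w"
  have pl: "p < length w" unfolding p_def by (rule smod[OF a])
  have o: "other_occ w p < length w \<and> other_occ w p \<noteq> p \<and> w ! other_occ w p = w ! p"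
    using other_occ[OF gw pl] .
  have "other_occ w p = a" using e unfolding next_state_def Let_def p_def
    by (auto split: if_splits)
  hence "w!p = w!a" "a \<noteq> p" using o by auto
  moreover have "count_list w (w!a) = 2" using gw a unfolding gauss_word_def by simp
  ultimately show ?thesis using adj_red[of w "w!a" a p] a p_def by simp
qed

lemma fixF:
  assumes gw: "gauss_word w" and a: "a < length w" and e: "next_state w eps (a, False) = (a, False)"
  shows "reducible w"
proof -
  define q where "q = other_occ w a"
  have o: "q < length w \<and> q \<noteq> a \<and> w ! q = w ! a"
    using other_occ[OF gw a] q_def by simp
  have "(other_occ w a + length w - 1) mod length w = a" using e unfolding next_state_def Let_def
    by (auto split: if_splits)
  hence "(q + length w - 1) mod length w = a" using q_def by simp
  hence "q = Suc a mod length w" using modlem o by blast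
  moreover have "count_list w (w!a) = 2" using gw a unfolding gauss_word_def by simp
  ultimately show ?thesis using adj_red[of w "w!a" a q] a o by simp
qed

lemma swapl:
  assumes gw: "gauss_word w" and a: "a < length w" and b: "b < length w" and ab: "a \<noteq> b"
    and e1: "next_state w eps (a, True) = (b, False)"
    and e2: "next_state w eps (b, False) = (a, True)"
  shows "reductivity w \<le> 1"
proof -
  define p where "p = Suc a mod length w"
  have pl: "p < length w" unfolding p_def by (rule smod[OF a])
  define q where "q = other_occ w p"
  have o: "q < length w \<and> q \<noteq> p \<and> w ! q = w ! p"
    using other_occ[OF gw pl] q_def by simp
  have "(q + length w - 1) mod length w = b" using e1 unfolding next_state_def Let_def p_def q_def
    by (auto split: if_splits)
  hence qb: "q = Suc b mod length w" using modlem o by blast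
  have "other_occ w b = a" using e2 unfolding next_state_def Let_def
    by (auto split: if_splits)
  hence wab: "w!a = w!b" using other_occ[OF gw b] by simp
  have zz: "w!(Suc a mod length w) = w!(Suc b mod length w)" using o qb p_def by simp
  have ca: "count_list w (w!a) = 2" using gw a unfolding gauss_word_def by simp
  show ?thesis
  proof (cases "w!a = w!p")
    case True
    have "p = a \<or> p = b" using pos2[OF ca a b ab refl wab[symmetric] pl True[symmetric]] .
    thus ?thesis
    proof
      assume "p = a"
      hence "Suc a mod length w = a" using p_def by simp
      hence "Suc a = length w" using a by (metis Suc_lessI mod_less n_not_Suc_n)
      hence "a = 0" using \<open>Suc a mod length w = a\<close> by simp
      hence "length w = 1" using \<open>Suc a = length w\<close> by simp
      thus ?thesis using a b ab by simp
    next
      assume "p = b"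
      hence "reducible w" using adj_red[OF ca a refl, of p] p_def True wab ab by simp
      thus ?thesis by (rule red0)
    qed
  next
    case False
    show ?thesis
    proof (cases "a < b")
      case True
      show ?thesis by (rule splice_red[OF gw True b refl wab[symmetric] refl zz[symmetric]])
        (use False p_def in simp)
    next
      case False2: False
      hence "b < a" using ab by simp
      show ?thesis by (rule splice_red[OF gw \<open>b < a\<close> a refl wab refl zz])
        (use False p_def wab zz in simp)
    qed
  qed
qed

theorem mainTheorem2:
  fixes w :: "'a list" and eps :: "'a \<Rightarrow> bool" and R :: "(nat \<times> bool) set"
  assumes "spherical_curve w eps"
    and "R \<in> regions w eps"
    and "bigon R"
    and "\<not> coherent R"
  shows "reductivity w \<le> 1"
proof -
  have gw: "gauss_word w" using assms(1) unfolding spherical_curve_def by simp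
  define f where "f = next_state w eps"
  obtain x where x: "x \<in> states w" and Rx: "R = region_of w eps x"
    using assms(2) unfolding regions_def by blast
  have cl: "f s \<in> states w" if "s \<in> states w" for s
  proof -
    obtain i c where s: "s = (i, c)" by (cases s)
    have i: "i < length w" using that s unfolding states_def by simp
    have p: "Suc i mod length w < length w" by (rule smod[OF i])
    have L: "0 < length w" using i by (cases w) auto
    show ?thesis using other_occ[OF gw p] other_occ[OF gw i] L
      unfolding f_def s next_state_def Let_def states_def by auto
  qed
  have Rk: "(f ^^ k) x \<in> states w" for k
    by (induction k) (use x cl in auto)
  have Rst: "R \<subseteq> states w" using Rk unfolding Rx region_of_def f_def by blast
  have Rcl: "f s \<in> R" if sR: "s \<in> R" for s
  proof -
    obtain k where "s = (f ^^ k) x" using sR unfolding Rx region_of_def f_def by blast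
    hence "f s = (f ^^ Suc k) x" by simp
    thus ?thesis unfolding Rx region_of_def f_def by blast
  qed
  obtain a b where s: "(a, True) \<in> R" and t: "(b, False) \<in> R"
    using assms(4) unfolding coherent_def by (metis prod.collapse)
  have c2: "card R = 2" "card (fst ` R) = 2" using assms(3) unfolding bigon_def by auto
  then obtain u v where uv: "R = {u, v}" "u \<noteq> v" by (auto simp: card_2_iff)
  have Req: "R = {(a, True), (b, False)}" using uv s t by auto
  have ab: "a \<noteq> b" using c2(2) unfolding Req by auto
  have al: "a < length w" and bl: "b < length w" using Rst s t unfolding states_def by auto
  have fs: "f (a, True) \<in> {(a, True), (b, False)}" using Rcl[OF s] Req by simp
  have ft: "f (b, False) \<in> {(a, True), (b, False)}" using Rcl[OF t] Req by simp
  show ?thesis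
  proof (cases "f (a, True) = (a, True)")
    case True
    thus ?thesis using fixT[OF gw al] red0 unfolding f_def by blast
  next
    case F1: False
    show ?thesis
    proof (cases "f (b, False) = (b, False)")
      case True
      thus ?thesis using fixF[OF gw bl] red0 unfolding f_def by blast
    next
      case False
      thus ?thesis using F1 fs ft swapl[OF gw al bl ab] unfolding f_def by blast
    qed
  qed
qed

end
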